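(* Let $R$ be a commutative ring with identity, $I$ an ideal of $R$, and $M$ an $R$-module. The following are equivalent: (1) $M$ is $I$-prime and $I$-torsion; (2) $M$ is $I$-coprime and $I$-adically complete; (3) $M$ is $I$-reduced and $I$-torsion; (4) $M$ is $I$-coreduced and $I$-adically complete; (5) $IM=0$.
   Context: All rings are commutative with identity and modules are unital. For an ideal $I$ of $R$ and an $R$-module $M$, $(0:_M I)=\{m\in M: Im=0\}$. An $R$-module $M$ is $I$-prime if for all $m\in M$, $Im=0$ implies $m=0$ or $IM=0$; $I$-coprime if $IM=0$ or $IM=M$; $I$-reduced if for all $m\in M$, $I^2m=0$ implies $Im=0$; $I$-coreduced if $IM=I^2M$. The $I$-torsion functor is $\Gamma_I(M)=\{m\in M : I^k m=0 \text{ for some } k\geq 1\}$ and $M$ is $I$-torsion if $\Gamma_I(M)=M$. The $I$-adic completion is $\Lambda_I(M)=\varprojlim_k M/I^kM$, and $M$ is $I$-adically complete if the canonical map $M\to\Lambda_I(M)$ is an isomorphism. *)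

theory Defs
  imports Complex_Main
begin

text \<open>Setting: R is a type 'a of class comm_ring_1; an R-module M is the whole type 'b
  (class ab_group_add) with a scalar multiplication s satisfying the locale module s
  from HOL.Modules.\<close>

definition is_ideal :: "'a::comm_ring_1 set \<Rightarrow> bool" where
  "is_ideal I \<longleftrightarrow> 0 \<in> I \<and> (\<forall>a\<in>I. \<forall>b\<in>I. a + b \<in> I) \<and> (\<forall>a\<in>I. \<forall>r. r * a \<in> I)"

definition idl_prod :: "'a::comm_ring_1 set \<Rightarrow> 'a set \<Rightarrow> 'a set" where
  "idl_prod I J = {x. \<exists>(n::nat) f g. (\<forall>i<n. f i \<in> I \<and> g i \<in> J) \<and> x = (\<Sum>i<n. f i * g i)}"

fun idl_pow :: "'a::comm_ring_1 set \<Rightarrow> nat \<Rightarrow> 'a set" where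
  "idl_pow I 0 = UNIV"
| "idl_pow I (Suc k) = idl_prod I (idl_pow I k)"

definition idl_smul :: "('a::comm_ring_1 \<Rightarrow> 'b::ab_group_add \<Rightarrow> 'b) \<Rightarrow> 'a set \<Rightarrow> 'b set" where
  "idl_smul s I = {x. \<exists>(n::nat) f g. (\<forall>i<n. f i \<in> I) \<and> x = (\<Sum>i<n. s (f i) (g i))}"

definition I_prime :: "('a::comm_ring_1 \<Rightarrow> 'b::ab_group_add \<Rightarrow> 'b) \<Rightarrow> 'a set \<Rightarrow> bool" where
  "I_prime s I \<longleftrightarrow> (\<forall>m. (\<forall>a\<in>I. s a m = 0) \<longrightarrow> m = 0 \<or> idl_smul s I = {0})"

definition I_coprime :: "('a::comm_ring_1 \<Rightarrow> 'b::ab_group_add \<Rightarrow> 'b) \<Rightarrow> 'a set \<Rightarrow> bool" where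
  "I_coprime s I \<longleftrightarrow> idl_smul s I = {0} \<or> idl_smul s I = UNIV"

definition I_reduced :: "('a::comm_ring_1 \<Rightarrow> 'b::ab_group_add \<Rightarrow> 'b) \<Rightarrow> 'a set \<Rightarrow> bool" where
  "I_reduced s I \<longleftrightarrow> (\<forall>m. (\<forall>a\<in>idl_pow I 2. s a m = 0) \<longrightarrow> (\<forall>a\<in>I. s a m = 0))"

definition I_coreduced :: "('a::comm_ring_1 \<Rightarrow> 'b::ab_group_add \<Rightarrow> 'b) \<Rightarrow> 'a set \<Rightarrow> bool" where
  "I_coreduced s I \<longleftrightarrow> idl_smul s I = idl_smul s (idl_pow I 2)"

definition I_torsion_part :: "('a::comm_ring_1 \<Rightarrow> 'b::ab_group_add \<Rightarrow> 'b) \<Rightarrow> 'a set \<Rightarrow> 'b set" where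
  "I_torsion_part s I = {m. \<exists>k\<ge>1. \<forall>a\<in>idl_pow I k. s a m = 0}"

definition I_torsion :: "('a::comm_ring_1 \<Rightarrow> 'b::ab_group_add \<Rightarrow> 'b) \<Rightarrow> 'a set \<Rightarrow> bool" where
  "I_torsion s I \<longleftrightarrow> I_torsion_part s I = UNIV"

text \<open>The I-adic completion Lambda_I(M) = inverse limit of M/I^kM, realised as the set of
  compatible families of cosets (c k a coset of I^kM, c (k+1) mapping to c k under the
  projection M/I^(k+1)M -> M/I^kM, i.e. c (k+1) contained in c k).\<close>
definition adic_completion :: "('a::comm_ring_1 \<Rightarrow> 'b::ab_group_add \<Rightarrow> 'b) \<Rightarrow> 'a set \<Rightarrow> (nat \<Rightarrow> 'b set) set" where
  "adic_completion s I = {c. (\<forall>k. \<exists>x. c k = (\<lambda>y. x + y) ` idl_smul s (idl_pow I k))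
                              \<and> (\<forall>k. c (Suc k) \<subseteq> c k)}"

definition adic_canonical :: "('a::comm_ring_1 \<Rightarrow> 'b::ab_group_add \<Rightarrow> 'b) \<Rightarrow> 'a set \<Rightarrow> 'b \<Rightarrow> nat \<Rightarrow> 'b set" where
  "adic_canonical s I m = (\<lambda>k. (\<lambda>y. m + y) ` idl_smul s (idl_pow I k))"

text \<open>Complete: the canonical (R-linear) map is an isomorphism, i.e. a bijection onto Lambda_I(M).\<close>
definition I_adically_complete :: "('a::comm_ring_1 \<Rightarrow> 'b::ab_group_add \<Rightarrow> 'b) \<Rightarrow> 'a set \<Rightarrow> bool" where
  "I_adically_complete s I \<longleftrightarrow> bij_betw (adic_canonical s I) UNIV (adic_completion s I)"

end

theory Submission
  imports Defs
begin

context
  fixes s :: "'a::comm_ring_1 \<Rightarrow> 'b::ab_group_add \<Rightarrow> 'b"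
  assumes ms: "module s"
begin

interpretation M: module s by (rule ms)

lemma smul_zero: "0 \<in> idl_smul s J"
  unfolding idl_smul_def by (rule CollectI, rule exI[of _ 0]) simp

lemma smul_gen: "a \<in> J \<Longrightarrow> s a g \<in> idl_smul s J"
  unfolding idl_smul_def
  by (rule CollectI, rule exI[of _ 1], rule exI[of _ "\<lambda>_. a"], rule exI[of _ "\<lambda>_. g"]) simp

lemma smul_add: assumes "x \<in> idl_smul s J" "y \<in> idl_smul s J" shows "x + y \<in> idl_smul s J"
proof -
  obtain n1 :: nat and f1 g1 where 1: "\<forall>i<n1. f1 i \<in> J" "x = (\<Sum>i<n1. s (f1 i) (g1 i))"
    using assms(1) unfolding idl_smul_def by auto
  obtain n2 :: nat and f2 g2 where 2: "\<forall>i<n2. f2 i \<in> J" "y = (\<Sum>i<n2. s (f2 i) (g2 i))"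
    using assms(2) unfolding idl_smul_def by auto
  define f where "f = (\<lambda>i. if i < n1 then f1 i else f2 (i - n1))"
  define g where "g = (\<lambda>i. if i < n1 then g1 i else g2 (i - n1))"
  have "(\<Sum>i<n1+n2. s (f i) (g i)) = (\<Sum>i<n1. s (f i) (g i)) + (\<Sum>i\<in>{n1..<n1+n2}. s (f i) (g i))"
    by (metis atLeast0LessThan le_add1 sum.atLeastLessThan_concat zero_le)
  also have "(\<Sum>i<n1. s (f i) (g i)) = x" using 1 by (simp add: f_def g_def)
  also have "(\<Sum>i\<in>{n1..<n1+n2}. s (f i) (g i)) = (\<Sum>i\<in>{0..<n2}. s (f (i+n1)) (g (i+n1)))"
    using sum.shift_bounds_nat_ivl[of "\<lambda>i. s (f i) (g i)" 0 n1 n2] by (simp add: add.commute)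
  also have "\<dots> = y" using 2 by (simp add: f_def g_def atLeast0LessThan)
  finally have "x + y = (\<Sum>i<n1+n2. s (f i) (g i))" by simp
  moreover have "\<forall>i<n1+n2. f i \<in> J" using 1 2 by (auto simp: f_def)
  ultimately show ?thesis unfolding idl_smul_def by auto
qed

lemma smul_scale: assumes "x \<in> idl_smul s J" shows "s c x \<in> idl_smul s J"
proof -
  obtain n1 :: nat and f1 g1 where 1: "\<forall>i<n1. f1 i \<in> J" "x = (\<Sum>i<n1. s (f1 i) (g1 i))"
    using assms(1) unfolding idl_smul_def by auto
  have "s c x = (\<Sum>i<n1. s (f1 i) (s c (g1 i)))"
    unfolding 1 M.scale_sum_right by (rule sum.cong) (simp_all add: M.scale_scale mult.commute)
  then show ?thesis using 1 unfolding idl_smul_def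
    by (intro CollectI exI[of _ n1] exI[of _ f1] exI[of _ "\<lambda>i. s c (g1 i)"]) auto
qed

lemma smul_sub: "M.subspace (idl_smul s J)"
  unfolding M.subspace_def using smul_zero smul_add smul_scale by blast

lemma lemA: assumes "a \<in> I" "x \<in> idl_smul s J" shows "s a x \<in> idl_smul s (idl_prod I J)"
proof -
  obtain n1 :: nat and f1 g1 where 1: "\<forall>i<n1. f1 i \<in> J" "x = (\<Sum>i<n1. s (f1 i) (g1 i))"
    using assms(2) unfolding idl_smul_def by auto
  have "s a x = (\<Sum>i<n1. s (a * f1 i) (g1 i))" using 1
    by (simp add: M.scale_sum_right M.scale_scale)
  moreover have "\<forall>i<n1. a * f1 i \<in> idl_prod I J"
  proof (intro allI impI)
    fix i assume "i < n1"
    then show "a * f1 i \<in> idl_prod I J" unfolding idl_prod_def using 1 assms(1)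
      by (intro CollectI exI[of _ 1] exI[of _ "\<lambda>_. a"] exI[of _ "\<lambda>_. f1 i"]) simp
  qed
  ultimately show ?thesis unfolding idl_smul_def
    by (intro CollectI exI[of _ n1] exI[of _ "\<lambda>i. a * f1 i"] exI[of _ g1]) auto
qed

lemma lemF: assumes "c \<in> idl_prod I J" "\<And>a b. a \<in> I \<Longrightarrow> b \<in> J \<Longrightarrow> s a (s b g) \<in> Y" "M.subspace Y"
  shows "s c g \<in> Y"
proof -
  obtain n :: nat and f h where 1: "\<forall>i<n. f i \<in> I \<and> h i \<in> J" "c = (\<Sum>i<n. f i * h i)"
    using assms(1) unfolding idl_prod_def by auto
  have "s c g = (\<Sum>i<n. s (f i) (s (h i) g))" using 1
    by (simp add: M.scale_sum_left M.scale_scale)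
  then show ?thesis apply (simp only:)
    apply (rule M.subspace_sum[OF assms(3)]) using 1 assms(2) by auto
qed

lemma lemG: assumes "x \<in> idl_smul s J" "\<And>c g. c \<in> J \<Longrightarrow> s c g \<in> Y" "M.subspace Y"
  shows "x \<in> Y"
proof -
  obtain n1 :: nat and f1 g1 where 1: "\<forall>i<n1. f1 i \<in> J" "x = (\<Sum>i<n1. s (f1 i) (g1 i))"
    using assms(1) unfolding idl_smul_def by auto
  then show ?thesis apply (simp only:)
    apply (rule M.subspace_sum[OF assms(3)]) using 1 assms(2) by auto
qed

lemma prod_mem: "a \<in> I \<Longrightarrow> b \<in> J \<Longrightarrow> a * b \<in> idl_prod I J"
  unfolding idl_prod_def
  by (intro CollectI exI[of _ 1] exI[of _ "\<lambda>_. a"] exI[of _ "\<lambda>_. b"]) simp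

lemma in_I1: "a \<in> I \<Longrightarrow> a \<in> idl_prod I UNIV"
  using prod_mem[of a I 1 UNIV] by simp

lemma pow2: "idl_pow I 2 = idl_prod I (idl_prod I UNIV)"
  by (simp add: numeral_2_eq_2)

lemma ann1: assumes "\<forall>a\<in>I. s a m = 0" "c \<in> idl_prod I UNIV" shows "s c m = 0"
proof -
  have "s c m \<in> {0}"
    by (rule lemF[OF assms(2) _ M.subspace_single_0]) (metis M.scale_left_commute M.scale_zero_right assms(1) insertI1)
  then show ?thesis by simp
qed

lemma ann2: assumes "\<forall>a\<in>I. \<forall>a'\<in>I. s a (s a' m) = 0" "c \<in> idl_pow I 2" shows "s c m = 0"
proof -
  have "s c m \<in> {0}"
  proof (rule lemF[OF assms(2)[unfolded pow2] _ M.subspace_single_0])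
    fix a b assume ab: "a \<in> I" "b \<in> idl_prod I UNIV"
    have "\<forall>a'\<in>I. s a' (s a m) = 0" using assms(1) ab(1) by (simp add: M.scale_left_commute)
    then have "s b (s a m) = 0" using ann1 ab(2) by blast
    then show "s a (s b m) \<in> {0}" by (metis M.scale_left_commute singletonI)
  qed
  then show ?thesis by simp
qed

lemma IM0_ann: "idl_smul s I = {0} \<Longrightarrow> a \<in> I \<Longrightarrow> s a m = 0"
  using smul_gen[of a I m] by auto

lemma powk_zero: assumes "idl_smul s I = {0}" shows "idl_smul s (idl_prod I (idl_pow I k)) = {0}"
proof -
  have "x \<in> {0}" if "x \<in> idl_smul s (idl_prod I (idl_pow I k))" for x
  proof (rule lemG[OF that _ M.subspace_single_0])
    fix c g assume "c \<in> idl_prod I (idl_pow I k)"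
    then show "s c g \<in> {0}"
      by (rule lemF[OF _ _ M.subspace_single_0]) (use IM0_ann[OF assms] in blast)
  qed
  then show ?thesis using smul_zero by blast
qed

lemma smul_UNIV: "idl_smul s UNIV = UNIV"
  using smul_gen[of 1 UNIV] by auto

lemma transl: "M.subspace N \<Longrightarrow> x \<in> N \<Longrightarrow> (\<lambda>y. x + y) ` N = N"
proof
  assume "M.subspace N" "x \<in> N"
  then show "(\<lambda>y. x + y) ` N \<subseteq> N" using M.subspace_add by blast
  show "N \<subseteq> (\<lambda>y. x + y) ` N"
  proof
    fix z assume "z \<in> N"
    then have "z - x \<in> N" using M.subspace_diff \<open>M.subspace N\<close> \<open>x \<in> N\<close> by blast
    then show "z \<in> (\<lambda>y. x + y) ` N" by (rule image_eqI[rotated]) simp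
  qed
qed

lemma complete0: assumes "idl_smul s I = {0}" shows "I_adically_complete s I"
proof -
  have can: "adic_canonical s I m = (\<lambda>k. if k = 0 then UNIV else {m})" for m
    unfolding adic_canonical_def
  proof
    fix k show "(\<lambda>y. m + y) ` idl_smul s (idl_pow I k) = (if k = 0 then UNIV else {m})"
      by (cases k) (simp_all add: smul_UNIV powk_zero[OF assms] transl[OF M.subspace_UNIV])
  qed
  have inj: "inj (adic_canonical s I)"
  proof
    fix m m' assume "adic_canonical s I m = adic_canonical s I m'"
    then have "{m} = {m'}" unfolding can by (metis One_nat_def Zero_not_Suc)
    then show "m = m'" by simp
  qed
  have img1: "adic_canonical s I m \<in> adic_completion s I" for m
    unfolding adic_completion_def
  proof (intro CollectI conjI allI)
    fix k show "\<exists>x. adic_canonical s I m k = (\<lambda>y. x + y) ` idl_smul s (idl_pow I k)"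
      by (rule exI[of _ m]) (simp add: adic_canonical_def)
    show "adic_canonical s I m (Suc k) \<subseteq> adic_canonical s I m k" unfolding can by auto
  qed
  have img2: "c \<in> range (adic_canonical s I)" if c: "c \<in> adic_completion s I" for c
  proof -
    have c1: "\<forall>k. \<exists>x. c k = (\<lambda>y. x + y) ` idl_smul s (idl_pow I k)" "\<forall>k. c (Suc k) \<subseteq> c k"
      using c unfolding adic_completion_def by auto
    have cS: "\<exists>x. c (Suc k) = {x}" for k
      using c1(1)[rule_format, of "Suc k"] by (auto simp: powk_zero[OF assms])
    obtain x where x: "c (Suc 0) = {x}" using cS by blast
    have "c (Suc k) = {x}" for k
    proof (induction k)
      case 0 then show ?case using x by simp
    next
      case (Suc k)
      obtain y where "c (Suc (Suc k)) = {y}" using cS by blast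
      then show ?case using c1(2)[rule_format, of "Suc k"] Suc by auto
    qed
    moreover have "c 0 = UNIV"
      using c1(1)[rule_format, of 0] by (auto simp: smul_UNIV transl[OF M.subspace_UNIV])
    ultimately have "c = adic_canonical s I x" unfolding can
      by (intro ext) (metis not0_implies_Suc)
    then show ?thesis by simp
  qed
  show ?thesis unfolding I_adically_complete_def bij_betw_def
    using inj img1 img2 by blast
qed

lemma reduced_step: assumes "I_reduced s I"
  shows "(\<forall>a\<in>idl_pow I (Suc k). s a m = 0) \<Longrightarrow> (\<forall>a\<in>I. s a m = 0)"
proof (induction k arbitrary: m)
  case 0
  then show ?case using in_I1 by auto
next
  case (Suc k)
  have "\<forall>a'\<in>I. s a' (s a m) = 0" if a: "a \<in> I" for a
  proof -
    have "\<forall>b\<in>idl_pow I (Suc k). s b (s a m) = 0"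
    proof
      fix b assume "b \<in> idl_pow I (Suc k)"
      then have "a * b \<in> idl_pow I (Suc (Suc k))" using prod_mem a by simp
      then show "s b (s a m) = 0" using Suc.prems by (simp add: M.scale_scale mult.commute)
    qed
    then show ?thesis using Suc.IH by blast
  qed
  then have "\<forall>a\<in>I. \<forall>a'\<in>I. s a (s a' m) = 0" by (simp add: M.scale_left_commute)
  then have "\<forall>a\<in>idl_pow I 2. s a m = 0" using ann2 by blast
  then show ?case using assms unfolding I_reduced_def by blast
qed

lemma prime_step: assumes "I_prime s I" "idl_smul s I \<noteq> {0}"
  shows "(\<forall>a\<in>idl_pow I k. s a m = 0) \<Longrightarrow> m = 0"
proof (induction k arbitrary: m)
  case 0
  then show ?case using M.scale_one[of m] by simp
next
  case (Suc k)
  have "s a m = 0" if a: "a \<in> I" for a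
  proof -
    have "\<forall>b\<in>idl_pow I k. s b (s a m) = 0"
    proof
      fix b assume "b \<in> idl_pow I k"
      then have "a * b \<in> idl_pow I (Suc k)" using prod_mem a by simp
      then show "s b (s a m) = 0" using Suc.prems by (simp add: M.scale_scale mult.commute)
    qed
    then show ?thesis using Suc.IH by blast
  qed
  then show ?case using assms unfolding I_prime_def by blast
qed

lemma IM_in_I1M: "x \<in> idl_smul s I \<Longrightarrow> x \<in> idl_smul s (idl_prod I UNIV)"
  by (rule lemG[OF _ _ smul_sub]) (auto intro: smul_gen in_I1)

lemma lemC: assumes "idl_smul s I \<subseteq> idl_smul s (idl_pow I 2)"
  shows "idl_smul s I \<subseteq> idl_smul s (idl_pow I k)"
proof (induction k)
  case 0
  then show ?case by (simp add: smul_UNIV)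
next
  case (Suc k)
  show ?case
  proof
    fix x assume "x \<in> idl_smul s I"
    then have "x \<in> idl_smul s (idl_pow I 2)" using assms by blast
    then show "x \<in> idl_smul s (idl_pow I (Suc k))"
    proof (rule lemG[OF _ _ smul_sub])
      fix c g assume "c \<in> idl_pow I 2"
      then have "c \<in> idl_prod I (idl_prod I UNIV)" unfolding pow2 .
      then show "s c g \<in> idl_smul s (idl_pow I (Suc k))"
      proof (rule lemF[OF _ _ smul_sub])
        fix a b assume ab: "a \<in> I" "b \<in> idl_prod I UNIV"
        have "s b g \<in> idl_smul s I"
          by (rule lemF[OF ab(2) _ smul_sub]) (use smul_gen in blast)
        then have "s b g \<in> idl_smul s (idl_pow I k)" using Suc.IH by blast
        then show "s a (s b g) \<in> idl_smul s (idl_pow I (Suc k))" using lemA[OF ab(1)] by (metis idl_pow.simps(2))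
      qed
    qed
  qed
qed

lemma lemB: assumes "\<And>k. idl_smul s I \<subseteq> idl_smul s (idl_pow I k)" "I_adically_complete s I"
  shows "idl_smul s I = {0}"
proof -
  have "x = 0" if x: "x \<in> idl_smul s I" for x
  proof -
    have "adic_canonical s I x = adic_canonical s I 0" unfolding adic_canonical_def
    proof
      fix k
      have "x \<in> idl_smul s (idl_pow I k)" using assms(1) x by blast
      then show "(\<lambda>y. x + y) ` idl_smul s (idl_pow I k) = (\<lambda>y. 0 + y) ` idl_smul s (idl_pow I k)"
        using transl[OF smul_sub] smul_zero by simp
    qed
    then show ?thesis using assms(2) unfolding I_adically_complete_def bij_betw_def inj_on_def by blast
  qed
  then show ?thesis using smul_zero by blast
qed

lemma lem12: assumes "idl_smul s I = UNIV" shows "idl_smul s I \<subseteq> idl_smul s (idl_pow I 2)"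
proof
  fix x assume "x \<in> idl_smul s I"
  then show "x \<in> idl_smul s (idl_pow I 2)"
  proof (rule lemG[OF _ _ smul_sub])
    fix c g assume "c \<in> I"
    have "g \<in> idl_smul s (idl_prod I UNIV)" using IM_in_I1M assms by blast
    then show "s c g \<in> idl_smul s (idl_pow I 2)" unfolding pow2 using lemA \<open>c \<in> I\<close> by blast
  qed
qed

end

theorem mainTheorem2:
  fixes s :: "'a::comm_ring_1 \<Rightarrow> 'b::ab_group_add \<Rightarrow> 'b"
    and I :: "'a set"
  assumes "module s"
    and "is_ideal I"
  shows "(I_prime s I \<and> I_torsion s I \<longleftrightarrow> idl_smul s I = {0})
       \<and> (I_coprime s I \<and> I_adically_complete s I \<longleftrightarrow> idl_smul s I = {0})
       \<and> (I_reduced s I \<and> I_torsion s I \<longleftrightarrow> idl_smul s I = {0})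
       \<and> (I_coreduced s I \<and> I_adically_complete s I \<longleftrightarrow> idl_smul s I = {0})"
proof -
  note ms = assms(1)
  interpret M: module s by (rule ms)
  have tors: "I_torsion s I" if z: "idl_smul s I = {0}"
  proof -
    have "m \<in> I_torsion_part s I" for m :: 'b
    proof -
      have "\<forall>a\<in>idl_pow I 1. s a m = 0"
        using ann1[OF ms, of I m] IM0_ann[OF ms z] by simp
      then show ?thesis unfolding I_torsion_part_def by blast
    qed
    then show ?thesis unfolding I_torsion_def by blast
  qed
  have allzero: "idl_smul s I = {0}" if "\<And>m::'b. \<forall>a\<in>I. s a m = 0"
  proof -
    have "x \<in> {0}" if "x \<in> idl_smul s I" for x
      by (rule lemG[OF ms that _ M.subspace_single_0]) (use \<open>\<And>m. \<forall>a\<in>I. s a m = 0\<close> in blast)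
    then show ?thesis using smul_zero[OF ms] by blast
  qed
  have c1: "I_prime s I \<and> I_torsion s I \<longleftrightarrow> idl_smul s I = {0}"
  proof
    assume h: "I_prime s I \<and> I_torsion s I"
    show "idl_smul s I = {0}"
    proof (rule ccontr)
      assume ne: "idl_smul s I \<noteq> {0}"
      have "m = 0" for m :: 'b
      proof -
        have "m \<in> I_torsion_part s I" using h unfolding I_torsion_def by blast
        then obtain k where "\<forall>a\<in>idl_pow I k. s a m = 0" unfolding I_torsion_part_def by blast
        then show ?thesis using prime_step[OF ms _ ne] h by blast
      qed
      then have "\<And>m. \<forall>a\<in>I. s a m = 0" by blast
      then show False using allzero ne by blast
    qed
  next
    assume z: "idl_smul s I = {0}"
    then show "I_prime s I \<and> I_torsion s I" using tors unfolding I_prime_def by blast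
  qed
  have c2: "I_coprime s I \<and> I_adically_complete s I \<longleftrightarrow> idl_smul s I = {0}"
  proof
    assume h: "I_coprime s I \<and> I_adically_complete s I"
    show "idl_smul s I = {0}"
    proof (cases "idl_smul s I = UNIV")
      case True
      show ?thesis by (rule lemB[OF ms lemC[OF ms lem12[OF ms True]]]) (use h in blast)
    next
      case False
      then show ?thesis using h unfolding I_coprime_def by blast
    qed
  next
    assume z: "idl_smul s I = {0}"
    then show "I_coprime s I \<and> I_adically_complete s I"
      using complete0[OF ms z] unfolding I_coprime_def by blast
  qed
  have c3: "I_reduced s I \<and> I_torsion s I \<longleftrightarrow> idl_smul s I = {0}"
  proof
    assume h: "I_reduced s I \<and> I_torsion s I"
    have "\<forall>a\<in>I. s a m = 0" for m :: 'b
    proof -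
      have "m \<in> I_torsion_part s I" using h unfolding I_torsion_def by blast
      then obtain k where k: "k \<ge> 1" "\<forall>a\<in>idl_pow I k. s a m = 0" unfolding I_torsion_part_def by blast
      then obtain k' where "k = Suc k'" by (cases k) auto
      then show ?thesis using reduced_step[OF ms, of I k' m] h k by blast
    qed
    then show "idl_smul s I = {0}" using allzero by blast
  next
    assume z: "idl_smul s I = {0}"
    then show "I_reduced s I \<and> I_torsion s I" using tors IM0_ann[OF ms z]
      unfolding I_reduced_def by blast
  qed
  have c4: "I_coreduced s I \<and> I_adically_complete s I \<longleftrightarrow> idl_smul s I = {0}"
  proof
    assume h: "I_coreduced s I \<and> I_adically_complete s I"
    then have "idl_smul s I \<subseteq> idl_smul s (idl_pow I 2)" unfolding I_coreduced_def by blast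
    show "idl_smul s I = {0}" by (rule lemB[OF ms lemC[OF ms]]) (use h \<open>idl_smul s I \<subseteq> _\<close> in blast)+
  next
    assume z: "idl_smul s I = {0}"
    have "idl_smul s (idl_pow I 2) = {0}" using powk_zero[OF ms z, of 1] by (simp add: numeral_2_eq_2)
    then show "I_coreduced s I \<and> I_adically_complete s I"
      using complete0[OF ms z] z unfolding I_coreduced_def by blast
  qed
  show ?thesis using c1 c2 c3 c4 by blast
qed

end
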